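(* Let $m,n\in\mathbf{N}$ and let $\nu$ be a partition of $n-1$ with at most $m$ parts. Then there is a unique set family of shape $(m^n)$ and type $(m^n)\star\nu$.
   Context: A set family of shape $(m^n)$ is a collection of $n$ distinct $m$-subsets of $\mathbf{N}$; it has type $\lambda$ (largest part $a$, conjugate $\lambda'$) if for each $i\in\{1,\dots,a\}$ exactly $\lambda'_i$ of its sets contain $i$. For a partition $\nu$ of $n-1$ with $k\le m$ parts, $(m^n)\star\nu$ is the partition obtained from the Young diagram of $(m^n)$ by, for each $i$ with $1\le i\le k$, deleting $\nu_i$ boxes (from the bottom) of column $m+1-i$ and adding $\nu_i$ boxes to the end of row $i$. *)

theory Defs
  imports Main
begin

definition is_partition_of :: "nat \<Rightarrow> nat list \<Rightarrow> bool" where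
  "is_partition_of k \<nu> \<longleftrightarrow>
     (\<forall>x\<in>set \<nu>. 0 < x) \<and> sorted_wrt (\<ge>) \<nu> \<and> sum_list \<nu> = k"

text \<open>Conjugate partition: the i-th part (i >= 1) is the number of parts of size at least i.\<close>
definition conj_part :: "nat list \<Rightarrow> nat \<Rightarrow> nat" where
  "conj_part lam i = length (filter (\<lambda>x. i \<le> x) lam)"

definition largest_part :: "nat list \<Rightarrow> nat" where
  "largest_part lam = foldr max lam 0"

definition has_shape :: "nat \<Rightarrow> nat \<Rightarrow> nat set set \<Rightarrow> bool" where
  "has_shape m n F \<longleftrightarrow> finite F \<and> card F = n \<and>
     (\<forall>S\<in>F. finite S \<and> card S = m \<and> S \<subseteq> {1..})"

definition has_type :: "nat set set \<Rightarrow> nat list \<Rightarrow> bool" where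
  "has_type F lam \<longleftrightarrow>
     (\<forall>i\<in>{1..largest_part lam}. card {S\<in>F. i \<in> S} = conj_part lam i)"

text \<open>Young diagram (cells (row, column), 1-indexed) of (m^n) star nu.\<close>
definition star_diagram :: "nat \<Rightarrow> nat \<Rightarrow> nat list \<Rightarrow> (nat \<times> nat) set" where
  "star_diagram m n \<nu> =
     ({(r, c). 1 \<le> r \<and> r \<le> n \<and> 1 \<le> c \<and> c \<le> m}
       - {(r, c). \<exists>i. 1 \<le> i \<and> i \<le> length \<nu> \<and> c = m + 1 - i
                      \<and> n - \<nu> ! (i - 1) < r \<and> r \<le> n})
     \<union> {(r, c). 1 \<le> r \<and> r \<le> length \<nu> \<and> m < c \<and> c \<le> m + \<nu> ! (r - 1)}"

definition star :: "nat \<Rightarrow> nat \<Rightarrow> nat list \<Rightarrow> nat list" where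
  "star m n \<nu> = map (\<lambda>r. card {c. (r, c) \<in> star_diagram m n \<nu>}) [1..<n+1]"

end

theory Submission
  imports Defs
begin


definition cnt :: "nat set set \<Rightarrow> nat \<Rightarrow> nat" where "cnt F x = card {S\<in>F. x \<in> S}"

definition gs :: "nat \<Rightarrow> nat \<Rightarrow> nat \<Rightarrow> nat set" where
  "gs m i j = insert (m+j) ({1..m} - {m+1-i})"

lemma gs_low: "1 \<le> i \<Longrightarrow> i \<le> m \<Longrightarrow> 1 \<le> j \<Longrightarrow> x \<in> {1..m} \<Longrightarrow> x \<notin> gs m i j \<longleftrightarrow> x = m+1-i"
  by (auto simp: gs_def)

lemma gs_high: "m < y \<Longrightarrow> 1 \<le> j \<Longrightarrow> y \<in> gs m i j \<longleftrightarrow> y = m+j"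
  by (auto simp: gs_def)

lemma gs_inj: "1 \<le> i \<Longrightarrow> i \<le> m \<Longrightarrow> 1 \<le> i' \<Longrightarrow> i' \<le> m \<Longrightarrow> 1 \<le> j \<Longrightarrow> 1 \<le> j'
   \<Longrightarrow> gs m i j = gs m i' j' \<Longrightarrow> i = i' \<and> j = j'"
proof -
  assume a: "1 \<le> i" "i \<le> m" "1 \<le> i'" "i' \<le> m" "1 \<le> j" "1 \<le> j'" "gs m i j = gs m i' j'"
  have k: "m+1-i \<in> {1..m}" using a by auto
  have "m+1-i \<notin> gs m i' j'" using a(7) gs_low[OF a(1,2,5) k] by auto
  then have "m+1-i = m+1-i'" using gs_low[OF a(3,4,6) k] by auto
  moreover have "m+j \<in> gs m i' j'" using a(7)[symmetric] by (simp add: gs_def)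
  then have "m+j = m+j'" using gs_high[of m "m+j" j' i'] a by auto
  ultimately show ?thesis using a by auto
qed

lemma gs_card: "1 \<le> i \<Longrightarrow> i \<le> m \<Longrightarrow> 1 \<le> j \<Longrightarrow> card (gs m i j) = m"
proof -
  assume a: "1 \<le> i" "i \<le> m" "1 \<le> j"
  have "card ({1..m} - {m+1-i}) = m - 1" using a by (subst card_Diff_singleton) auto
  then show ?thesis using a by (auto simp: gs_def)
qed

lemma gs_ne: "1 \<le> j \<Longrightarrow> gs m i j \<noteq> {1..m}"
proof
  assume "1 \<le> j" "gs m i j = {1..m}"
  moreover have "m+j \<in> gs m i j" by (simp add: gs_def)
  ultimately show False by auto
qed

lemma gs_sub: "1 \<le> j \<Longrightarrow> gs m i j \<subseteq> {1..}" by (auto simp: gs_def)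

lemma card_split: "finite F \<Longrightarrow> card {S\<in>F. x \<in> S} = card F - card {S\<in>F. x \<notin> S}"
proof -
  assume f: "finite F"
  have "{S\<in>F. x \<in> S} = F - {S\<in>F. x \<notin> S}" by auto
  then show ?thesis using f by (simp add: card_Diff_subset)
qed

lemma ind_sum: "finite A \<Longrightarrow> (\<Sum>x\<in>A. if P x then 1 else 0) = (card {x\<in>A. P x} :: nat)"
  by (simp add: sum.If_cases Int_def)

lemma card_split_Diff: "finite S \<Longrightarrow> card S = card (S \<inter> A) + card (S - A)"
  by (metis card_Int_Diff)

definition Nf :: "nat list \<Rightarrow> nat \<Rightarrow> nat" where
  "Nf \<nu> i = (if 1 \<le> i \<and> i \<le> length \<nu> then \<nu>!(i-1) else 0)"

lemma sum_list_ge_length: "\<forall>x\<in>set xs. (0::nat) < x \<Longrightarrow> length xs \<le> sum_list xs"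
  by (induction xs) auto

locale stp =
  fixes m n :: nat and \<nu> :: "nat list"
  assumes n1: "1 \<le> n"
    and part: "is_partition_of (n - 1) \<nu>"
    and len: "length \<nu> \<le> m"
begin

abbreviation "N \<equiv> Nf \<nu>"
abbreviation "L \<equiv> length \<nu>"

lemma pos: "\<forall>x\<in>set \<nu>. 0 < x" and srt: "sorted_wrt (\<ge>) \<nu>" and sm: "sum_list \<nu> = n - 1"
  using part by (auto simp: is_partition_of_def)

lemma N_anti: "1 \<le> i \<Longrightarrow> i \<le> i' \<Longrightarrow> N i' \<le> N i"
proof -
  assume a: "1 \<le> i" "i \<le> i'"
  show ?thesis
  proof (cases "i' \<le> L")
    case True
    show ?thesis
    proof (cases "i = i'")
      case False
      then have "i - 1 < i' - 1" using a by auto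
      then have "\<nu>!(i'-1) \<le> \<nu>!(i-1)" using srt True a sorted_wrt_nth_less[OF srt, of "i-1" "i'-1"] by auto
      then show ?thesis using a True by (auto simp: Nf_def)
    qed auto
  qed (auto simp: Nf_def)
qed

lemma N_pos_le: "0 < N r \<Longrightarrow> 1 \<le> r \<and> r \<le> L"
  by (auto simp: Nf_def split: if_splits)

lemma N1_bound: "1 \<le> r \<Longrightarrow> r \<le> L \<Longrightarrow> N 1 + r \<le> n"
proof -
  assume r: "1 \<le> r" "r \<le> L"
  then obtain x xs where nu: "\<nu> = x # xs" by (cases \<nu>) auto
  have "length xs \<le> sum_list xs" using pos nu by (intro sum_list_ge_length) auto
  then show ?thesis using sm nu r n1 by (auto simp: Nf_def)
qed

lemma N_le: "N k \<le> N 1"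
  using N_anti[of 1 k] by (cases "k = 0") (auto simp: Nf_def)

lemma N_le_n: "N k + 1 \<le> n"
proof (cases "L = 0")
  case True then show ?thesis using n1 by (auto simp: Nf_def)
next
  case False then have "1 \<le> L" by (cases \<nu>) auto
  then show ?thesis using N1_bound[of 1] N_le[of k] by auto
qed

lemma sum_N: "(\<Sum>k\<in>{1..m}. N k) = n - 1"
proof -
  have "(\<Sum>k\<in>{1..m}. N k) = (\<Sum>k\<in>{1..L}. N k)"
    using len by (intro sum.mono_neutral_right) (auto simp: Nf_def)
  also have "\<dots> = (\<Sum>k\<in>Suc ` {..<L}. N k)"
    proof -
      have "{1..L} = Suc ` {..<L}" by (simp add: image_Suc_lessThan)
      then show ?thesis by simp
    qed
  also have "\<dots> = (\<Sum>k<L. \<nu>!k)"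
    by (subst sum.reindex) (auto simp: Nf_def)
  also have "\<dots> = n - 1" using sm by (simp add: sum_list_sum_nth atLeast0LessThan)
  finally show ?thesis .
qed

abbreviation "D \<equiv> star_diagram m n \<nu>"

lemma D_eq: "(r,c) \<in> D \<longleftrightarrow>
   (1\<le>r \<and> r\<le>n \<and> 1\<le>c \<and> c\<le>m \<and> r \<le> n - N(m+1-c)) \<or> (1 \<le> r \<and> m < c \<and> c \<le> m + N r)"
proof -
  have A: "(\<exists>i. 1 \<le> i \<and> i \<le> L \<and> c = m + 1 - i \<and> n - \<nu> ! (i - 1) < r \<and> r \<le> n)
     \<longleftrightarrow> n - N(m+1-c) < r \<and> r \<le> n" if "1 \<le> c" "c \<le> m"
  proof
    assume "\<exists>i. 1 \<le> i \<and> i \<le> L \<and> c = m + 1 - i \<and> n - \<nu> ! (i - 1) < r \<and> r \<le> n"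
    then obtain i where "1 \<le> i" "i \<le> L" "c = m + 1 - i" "n - \<nu> ! (i - 1) < r" "r \<le> n" by blast
    moreover have "m + 1 - c = i" using calculation len by auto
    ultimately show "n - N(m+1-c) < r \<and> r \<le> n" by (auto simp: Nf_def)
  next
    assume a: "n - N(m+1-c) < r \<and> r \<le> n"
    then have "N(m+1-c) \<noteq> 0" by auto
    then have "1 \<le> m+1-c \<and> m+1-c \<le> L" using N_pos_le by blast
    then show "\<exists>i. 1 \<le> i \<and> i \<le> L \<and> c = m + 1 - i \<and> n - \<nu> ! (i - 1) < r \<and> r \<le> n"
      using a that by (intro exI[of _ "m+1-c"]) (auto simp: Nf_def)
  qed
  have B: "(1 \<le> r \<and> r \<le> L \<and> m < c \<and> c \<le> m + \<nu> ! (r - 1)) \<longleftrightarrow> (1 \<le> r \<and> m < c \<and> c \<le> m + N r)"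
    by (auto simp: Nf_def)
  show ?thesis
    unfolding star_diagram_def using A B by auto
qed

lemma col_low: "1 \<le> x \<Longrightarrow> x \<le> m \<Longrightarrow> card {r\<in>{1..n}. (r,x) \<in> D} = n - N(m+1-x)"
proof -
  assume x: "1 \<le> x" "x \<le> m"
  have "{r\<in>{1..n}. (r,x) \<in> D} = {1..n - N(m+1-x)}" using x by (auto simp: D_eq)
  then show ?thesis by simp
qed

definition Y where "Y = {(i,j). 1 \<le> i \<and> 1 \<le> j \<and> j \<le> N i}"

lemma col_high: "1 \<le> j \<Longrightarrow> {r\<in>{1..n}. (r,m+j) \<in> D} = {i. (i,j) \<in> Y}"
proof -
  assume j: "1 \<le> j"
  have "r \<le> n" if "1 \<le> r" "j \<le> N r" for r
  proof -
    have "r \<le> L" using N_pos_le[of r] that j by auto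
    then show ?thesis using N1_bound[of r] that by auto
  qed
  then show ?thesis using j by (auto simp: D_eq Y_def)
qed

lemma Y_Sigma: "Y = Sigma {1..L} (\<lambda>i. {1..N i})"
  using N_pos_le by (force simp: Y_def)

lemma card_Y: "card Y = n - 1"
proof -
  have "card Y = (\<Sum>i\<in>{1..L}. N i)" by (simp add: Y_Sigma card_SigmaI)
  also have "\<dots> = (\<Sum>k\<in>{1..m}. N k)"
    using len by (intro sum.mono_neutral_left) (auto simp: Nf_def)
  finally show ?thesis using sum_N by simp
qed

lemma finite_Y: "finite Y" by (simp add: Y_Sigma)

definition row where "row r = {c. (r,c) \<in> D}"

lemma row_sub: "row r \<subseteq> {1..m + N r}" by (auto simp: row_def D_eq)

lemma row_down: "1 \<le> r \<Longrightarrow> r \<le> n \<Longrightarrow> c \<in> row r \<Longrightarrow> 1 \<le> c' \<Longrightarrow> c' \<le> c \<Longrightarrow> c' \<in> row r"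
proof -
  assume a: "1 \<le> r" "r \<le> n" "c \<in> row r" "1 \<le> c'" "c' \<le> c"
  show ?thesis
  proof (cases "c \<le> m")
    case True
    then have "r \<le> n - N(m+1-c)" using a by (auto simp: row_def D_eq)
    moreover have "N(m+1-c') \<le> N(m+1-c)" using True a by (intro N_anti) auto
    ultimately show ?thesis using a True by (auto simp: row_def D_eq)
  next
    case False
    then have c: "c \<le> m + N r" using a by (auto simp: row_def D_eq)
    show ?thesis
    proof (cases "c' \<le> m")
      case True
      have "r \<le> L" using N_pos_le[of r] c False by auto
      then have "N 1 + r \<le> n" using N1_bound a by auto
      then have "r \<le> n - N(m+1-c')" using N_le[of "m+1-c'"] by auto
      then show ?thesis using a True by (auto simp: row_def D_eq)
    next
      case False
      then show ?thesis using a c by (auto simp: row_def D_eq)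
    qed
  qed
qed

lemma down_interval:
  fixes A :: "nat set"
  assumes "finite A" "A \<subseteq> {1..}" "\<And>c c'. c \<in> A \<Longrightarrow> 1 \<le> c' \<Longrightarrow> c' \<le> c \<Longrightarrow> c' \<in> A"
  shows "A = {1..card A}"
proof (cases "A = {}")
  case False
  have "A = {1..Max A}"
  proof
    show "A \<subseteq> {1..Max A}" using assms False by auto
    show "{1..Max A} \<subseteq> A" using assms(3)[of "Max A"] assms False by auto
  qed
  then show ?thesis by (metis card_atLeastAtMost diff_Suc_1)
qed simp

lemma row_interval: "1 \<le> r \<Longrightarrow> r \<le> n \<Longrightarrow> row r = {1..card (row r)}"
  apply (rule down_interval)
  using row_sub[of r] finite_subset apply blast
  using row_sub[of r] apply auto[1]
  using row_down by blast

lemma star_eq: "star m n \<nu> = map (\<lambda>r. card (row r)) [1..<n+1]"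
  by (simp add: star_def row_def)

lemma conj_star: "1 \<le> x \<Longrightarrow> conj_part (star m n \<nu>) x = card {r\<in>{1..n}. (r,x) \<in> D}"
proof -
  assume x: "1 \<le> x"
  have "conj_part (star m n \<nu>) x = length (filter (\<lambda>r. x \<le> card (row r)) [1..<n+1])"
    by (simp add: conj_part_def star_eq filter_map o_def)
  also have "\<dots> = card (set (filter (\<lambda>r. x \<le> card (row r)) [1..<n+1]))"
    by (metis distinct_card distinct_filter distinct_upt)
  also have "set (filter (\<lambda>r. x \<le> card (row r)) [1..<n+1]) = {r\<in>{1..n}. (r,x) \<in> D}"
  proof -
    have "x \<le> card (row r) \<longleftrightarrow> (r,x) \<in> D" if "1 \<le> r" "r \<le> n" for r
    proof -
      have "(r,x) \<in> D \<longleftrightarrow> x \<in> row r" by (simp add: row_def)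
      also have "\<dots> \<longleftrightarrow> x \<in> {1..card (row r)}" using row_interval[OF that] by simp
      finally show ?thesis using x by simp
    qed
    then show ?thesis by auto
  qed
  finally show ?thesis .
qed

lemma foldr_max_ge: "y \<in> set xs \<Longrightarrow> y \<le> foldr max xs (0::nat)"
  by (induction xs) auto

lemma largest: "m + N 1 \<le> largest_part (star m n \<nu>)"
proof -
  have "{1..m + N 1} \<subseteq> row 1"
  proof
    fix c assume c: "c \<in> {1..m + N 1}"
    show "c \<in> row 1"
    proof (cases "c \<le> m")
      case True
      have "1 \<le> n - N(m+1-c)" using N_le_n[of "m+1-c"] by arith
      then have "(1,c) \<in> D" unfolding D_eq using True c n1 by simp
      then show ?thesis by (simp add: row_def)
    next
      case False
      then have "(1,c) \<in> D" unfolding D_eq using c by simp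
      then show ?thesis by (simp add: row_def)
    qed
  qed
  moreover have "finite (row 1)" using row_sub[of 1] finite_subset by blast
  ultimately have "card {1..m + N 1} \<le> card (row 1)" by (rule card_mono[rotated])
  then have "m + N 1 \<le> card (row 1)" by simp
  also have "card (row 1) \<le> largest_part (star m n \<nu>)"
  proof -
    have "1 \<in> set [1..<n+1]" using n1 by auto
    then have "card (row 1) \<in> set (map (\<lambda>r. card (row r)) [1..<n+1])"
      by (simp only: set_map) (rule imageI)
    then show ?thesis unfolding largest_part_def star_eq by (rule foldr_max_ge)
  qed
  finally show ?thesis .
qed

lemma type_D: "has_type F (star m n \<nu>) \<Longrightarrow>
   (\<forall>x\<in>{1..m}. cnt F x = n - N(m+1-x)) \<and> (\<forall>j\<in>{1..N 1}. cnt F (m+j) = card {i. (i,j)\<in>Y})"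
proof -
  assume h: "has_type F (star m n \<nu>)"
  have c: "cnt F x = card {r\<in>{1..n}. (r,x) \<in> D}" if "1 \<le> x" "x \<le> m + N 1" for x
    using h that largest conj_star[of x] unfolding has_type_def cnt_def by auto
  show ?thesis
  proof safe
    fix x assume "x \<in> {1..m}" then show "cnt F x = n - N(m+1-x)" using c col_low by auto
  next
    fix j assume "j \<in> {1..N 1}" then show "cnt F (m+j) = card {i. (i,j)\<in>Y}"
      using c[of "m+j"] col_high[of j] by auto
  qed
qed

lemma type_I: "(\<forall>x\<in>{1..m}. cnt F x = n - N(m+1-x)) \<Longrightarrow> (\<forall>j\<ge>1. cnt F (m+j) = card {i. (i,j)\<in>Y})
   \<Longrightarrow> has_type F (star m n \<nu>)"
proof -
  assume lo: "\<forall>x\<in>{1..m}. cnt F x = n - N(m+1-x)" and hi: "\<forall>j\<ge>1. cnt F (m+j) = card {i. (i,j)\<in>Y}"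
  have "cnt F x = card {r\<in>{1..n}. (r,x) \<in> D}" if "1 \<le> x" for x
  proof (cases "x \<le> m")
    case True then show ?thesis using lo col_low that by auto
  next
    case False
    define j where "j = x - m"
    have j: "x = m + j" "1 \<le> j" using False by (auto simp: j_def)
    then show ?thesis using hi col_high[of j] by simp
  qed
  then show ?thesis unfolding has_type_def cnt_def using conj_star by auto
qed

lemma Y_bounds: "(i,j) \<in> Y \<Longrightarrow> 1 \<le> i \<and> i \<le> m \<and> 1 \<le> j"
  using N_pos_le[of i] len by (auto simp: Y_def)

definition F0 where "F0 = insert {1..m} ((\<lambda>(i,j). gs m i j) ` Y)"

lemma inj_gsY: "inj_on (\<lambda>(i,j). gs m i j) Y"
proof (rule inj_onI)
  fix p q assume p: "p \<in> Y" and q: "q \<in> Y" and e: "(\<lambda>(i,j). gs m i j) p = (\<lambda>(i,j). gs m i j) q"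
  obtain i j where pp: "p = (i,j)" by (cases p)
  obtain i' j' where qq: "q = (i',j')" by (cases q)
  have b: "1 \<le> i" "i \<le> m" "1 \<le> j" using Y_bounds p pp by auto
  have b': "1 \<le> i'" "i' \<le> m" "1 \<le> j'" using Y_bounds q qq by auto
  have "gs m i j = gs m i' j'" using e pp qq by simp
  then show "p = q" using gs_inj[OF b(1,2) b'(1,2) b(3) b'(3)] pp qq by simp
qed

lemma card_F0: "card F0 = n" and fin_F0: "finite F0"
proof -
  have "{1..m} \<notin> (\<lambda>(i,j). gs m i j) ` Y"
  proof
    assume "{1..m} \<in> (\<lambda>(i,j). gs m i j) ` Y"
    then obtain i j where "(i,j) \<in> Y" "{1..m} = gs m i j" by auto
    then show False using gs_ne[of j m i] Y_bounds by auto
  qed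
  moreover have "card ((\<lambda>(i,j). gs m i j) ` Y) = n - 1" using card_image[OF inj_gsY] card_Y by simp
  ultimately show "card F0 = n" using n1 finite_Y by (simp add: F0_def)
  show "finite F0" using finite_Y by (simp add: F0_def)
qed

lemma shape_F0: "has_shape m n F0"
  unfolding has_shape_def
proof -
  have "finite S \<and> card S = m \<and> S \<subseteq> {1..}" if "S \<in> F0" for S
  proof -
  from that consider "S = {1..m}" | i j where "(i,j) \<in> Y" "S = gs m i j" by (auto simp: F0_def)
  then show "finite S \<and> card S = m \<and> S \<subseteq> {1..}"
  proof cases
    case 2
    then have b: "1 \<le> i" "i \<le> m" "1 \<le> j" using Y_bounds by auto
    have "finite S" using 2 by (simp add: gs_def)
    then show ?thesis using 2 gs_card[OF b] gs_sub[OF b(3)] by simp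
  qed auto
  qed
  then show "finite F0 \<and> card F0 = n \<and> (\<forall>S\<in>F0. finite S \<and> card S = m \<and> S \<subseteq> {1..})"
    using card_F0 fin_F0 by auto
qed

lemma type_F0: "has_type F0 (star m n \<nu>)"
proof (rule type_I)
  show "\<forall>x\<in>{1..m}. cnt F0 x = n - N(m+1-x)"
  proof
    fix x assume x: "x \<in> {1..m}"
    let ?k = "m+1-x"
    have "{S\<in>F0. x \<notin> S} = (\<lambda>(i,j). gs m i j) ` {p\<in>Y. fst p = ?k}"
    proof (intro set_eqI iffI)
      fix S assume S: "S \<in> {S\<in>F0. x \<notin> S}"
      then have "S \<noteq> {1..m}" using x by auto
      then obtain i j where ij: "(i,j) \<in> Y" "S = gs m i j" using S by (auto simp: F0_def)
      then have b: "1 \<le> i" "i \<le> m" "1 \<le> j" using Y_bounds by auto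
      have "x = m+1-i" using gs_low[OF b x] S ij by simp
      then have "i = ?k" using b by simp
      then show "S \<in> (\<lambda>(i,j). gs m i j) ` {p\<in>Y. fst p = ?k}" using ij by force
    next
      fix S assume "S \<in> (\<lambda>(i,j). gs m i j) ` {p\<in>Y. fst p = ?k}"
      then obtain i j where ij: "(i,j) \<in> Y" "S = gs m i j" "i = ?k" by auto
      then have b: "1 \<le> i" "i \<le> m" "1 \<le> j" using Y_bounds by auto
      have "x = m+1-i" using ij x by simp
      then have "x \<notin> S" using gs_low[OF b x] ij by simp
      then show "S \<in> {S\<in>F0. x \<notin> S}" using ij by (auto simp: F0_def)
    qed
    then have "card {S\<in>F0. x \<notin> S} = card {p\<in>Y. fst p = ?k}"
      by (simp add: card_image inj_on_subset[OF inj_gsY])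
    also have "{p\<in>Y. fst p = ?k} = {?k} \<times> {1..N ?k}" using x by (auto simp: Y_def)
    finally have "card {S\<in>F0. x \<notin> S} = N ?k" by simp
    then show "cnt F0 x = n - N ?k" unfolding cnt_def using card_split[OF fin_F0] card_F0 by simp
  qed
  show "\<forall>j\<ge>1. cnt F0 (m+j) = card {i. (i,j)\<in>Y}"
  proof safe
    fix j :: nat assume j: "1 \<le> j"
    have "{S\<in>F0. m+j \<in> S} = (\<lambda>(i,j). gs m i j) ` {p\<in>Y. snd p = j}"
    proof (intro set_eqI iffI)
      fix S assume S: "S \<in> {S\<in>F0. m+j \<in> S}"
      then have "S \<noteq> {1..m}" using j by auto
      then obtain i j' where ij: "(i,j') \<in> Y" "S = gs m i j'" using S by (auto simp: F0_def)
      then have b: "1 \<le> i" "i \<le> m" "1 \<le> j'" using Y_bounds by auto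
      have "m+j = m+j'" using gs_high[of m "m+j" j' i] b j S ij by simp
      then show "S \<in> (\<lambda>(i,j). gs m i j) ` {p\<in>Y. snd p = j}" using ij by force
    next
      fix S assume "S \<in> (\<lambda>(i,j). gs m i j) ` {p\<in>Y. snd p = j}"
      then obtain i where ij: "(i,j) \<in> Y" "S = gs m i j" by auto
      then have "m+j \<in> S" by (simp add: gs_def)
      then show "S \<in> {S\<in>F0. m+j \<in> S}" using ij by (auto simp: F0_def)
    qed
    then have "card {S\<in>F0. m+j \<in> S} = card {p\<in>Y. snd p = j}"
      by (simp add: card_image inj_on_subset[OF inj_gsY])
    also have "{p\<in>Y. snd p = j} = (\<lambda>i. (i,j)) ` {i. (i,j)\<in>Y}" by auto
    also have "card \<dots> = card {i. (i,j)\<in>Y}" by (rule card_image) (auto simp: inj_on_def)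
    finally show "cnt F0 (m+j) = card {i. (i,j)\<in>Y}" by (simp add: cnt_def)
  qed
qed

lemma count_rows:
  fixes Q :: "(nat \<times> nat) set" and t :: nat
  assumes b: "\<forall>p\<in>Q. 1 \<le> fst p \<and> fst p \<le> m \<and> 1 \<le> snd p"
  shows "card {p\<in>Q. snd p \<le> t} = (\<Sum>i\<in>{1..m}. card {j. (i,j)\<in>Q \<and> j \<le> t})"
proof -
  have "{p\<in>Q. snd p \<le> t} = Sigma {1..m} (\<lambda>i. {j. (i,j)\<in>Q \<and> j \<le> t})" using b by force
  moreover have "\<forall>i\<in>{1..m}. finite {j. (i,j)\<in>Q \<and> j \<le> t}"
  proof
    fix i show "finite {j. (i,j)\<in>Q \<and> j \<le> t}" by (rule finite_subset[of _ "{..t}"]) auto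
  qed
  ultimately show ?thesis by (simp add: card_SigmaI)
qed

lemma count_cols:
  fixes Q :: "(nat \<times> nat) set" and t :: nat
  assumes b: "\<forall>p\<in>Q. 1 \<le> fst p \<and> fst p \<le> m \<and> 1 \<le> snd p"
  shows "card {p\<in>Q. snd p \<le> t} = (\<Sum>j\<in>{1..t}. card {i. (i,j)\<in>Q})"
proof -
  have "(\<lambda>(i,j). (j,i)) ` {p\<in>Q. snd p \<le> t} = Sigma {1..t} (\<lambda>j. {i. (i,j)\<in>Q})" using b by force
  moreover have "\<forall>j\<in>{1..t}. finite {i. (i,j)\<in>Q}"
  proof
    fix j show "finite {i. (i,j)\<in>Q}" by (rule finite_subset[of _ "{..m}"]) (use b in force)+
  qed
  moreover have inj: "inj_on (\<lambda>(i,j). (j::nat,i::nat)) {p\<in>Q. snd p \<le> t}" by (auto simp: inj_on_def)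
  ultimately have "card ((\<lambda>(i,j). (j,i)) ` {p\<in>Q. snd p \<le> t}) = (\<Sum>j\<in>{1..t}. card {i. (i,j)\<in>Q})"
    by (simp add: card_SigmaI)
  moreover have "card ((\<lambda>(i,j). (j,i)) ` {p\<in>Q. snd p \<le> t}) = card {p\<in>Q. snd p \<le> t}"
    using inj by (rule card_image)
  ultimately show ?thesis by simp
qed

lemma Y_b: "\<forall>p\<in>Y. 1 \<le> fst p \<and> fst p \<le> m \<and> 1 \<le> snd p"
  using Y_bounds by auto

lemma ferrers:
  assumes Pb: "\<forall>p\<in>P. 1 \<le> fst p \<and> fst p \<le> m \<and> 1 \<le> snd p"
    and rows: "\<forall>i\<in>{1..m}. finite {j. (i,j)\<in>P} \<and> card {j. (i,j)\<in>P} = N i"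
    and cols: "\<forall>j\<in>{1..N 1}. card {i. (i,j)\<in>P} = card {i. (i,j)\<in>Y}"
  shows "P \<subseteq> Y"
proof
  fix p assume pP: "p \<in> P"
  obtain i0 j0 where p: "p = (i0,j0)" by (cases p)
  have b: "1 \<le> i0" "i0 \<le> m" "1 \<le> j0" using Pb pP p by auto
  show "p \<in> Y"
  proof (rule ccontr)
    assume "p \<notin> Y"
    have j0: "N i0 < j0"
    proof (rule ccontr)
      assume "\<not> N i0 < j0"
      then have "(i0,j0) \<in> Y" using b unfolding Y_def by simp
      then show False using \<open>p \<notin> Y\<close> p by simp
    qed
    define t where "t = N i0"
    have t1: "t \<le> N 1" using N_anti[of 1 i0] b by (simp add: t_def)
    have "(\<Sum>i\<in>{1..m}. card {j. (i,j)\<in>P \<and> j \<le> t}) = card {p\<in>P. snd p \<le> t}"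
      using count_rows[OF Pb] by simp
    also have "\<dots> = (\<Sum>j\<in>{1..t}. card {i. (i,j)\<in>P})" using count_cols[OF Pb] by simp
    also have "\<dots> = (\<Sum>j\<in>{1..t}. card {i. (i,j)\<in>Y})" using cols t1 by (intro sum.cong) auto
    also have "\<dots> = card {p\<in>Y. snd p \<le> t}" using count_cols[OF Y_b] by simp
    also have "\<dots> = (\<Sum>i\<in>{1..m}. card {j. (i,j)\<in>Y \<and> j \<le> t})" using count_rows[OF Y_b] by simp
    also have "\<dots> = (\<Sum>i\<in>{1..m}. min (N i) t)"
    proof (intro sum.cong refl)
      fix i assume "i \<in> {1..m}"
      then have "{j. (i,j)\<in>Y \<and> j \<le> t} = {1..min (N i) t}" by (auto simp: Y_def)
      then show "card {j. (i,j)\<in>Y \<and> j \<le> t} = min (N i) t" by simp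
    qed
    finally have eq: "(\<Sum>i\<in>{1..m}. card {j. (i,j)\<in>P \<and> j \<le> t}) = (\<Sum>i\<in>{1..m}. min (N i) t)" .
    have le: "card {j. (i,j)\<in>P \<and> j \<le> t} \<le> min (N i) t" if i: "i \<in> {1..m}" for i
    proof -
      have "{j. (i,j)\<in>P \<and> j \<le> t} \<subseteq> {1..t}"
      proof
        fix j assume "j \<in> {j. (i,j)\<in>P \<and> j \<le> t}"
        then have ij: "(i,j)\<in>P" "j \<le> t" by auto
        have "1 \<le> j" using bspec[OF Pb ij(1)] by simp
        then show "j \<in> {1..t}" using ij by simp
      qed
      from card_mono[OF finite_atLeastAtMost this]
      have "card {j. (i,j)\<in>P \<and> j \<le> t} \<le> t" by simp
      moreover have "card {j. (i,j)\<in>P \<and> j \<le> t} \<le> N i"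
      proof -
        have fin: "finite {j. (i,j)\<in>P}" and cr: "card {j. (i,j)\<in>P} = N i" using rows i by auto
        have "{j. (i,j)\<in>P \<and> j \<le> t} \<subseteq> {j. (i,j)\<in>P}" by blast
        from card_mono[OF fin this] show ?thesis using cr by simp
      qed
      ultimately show ?thesis by simp
    qed
    have lt: "card {j. (i0,j)\<in>P \<and> j \<le> t} < min (N i0) t"
    proof -
      have fin: "finite {j. (i0,j)\<in>P}" and cr: "card {j. (i0,j)\<in>P} = N i0" using rows b by auto
      have jin: "j0 \<in> {j. (i0,j)\<in>P}" using pP p by simp
      have "{j. (i0,j)\<in>P \<and> j \<le> t} \<subseteq> {j. (i0,j)\<in>P} - {j0}" using j0 t_def by auto
      then have "card {j. (i0,j)\<in>P \<and> j \<le> t} \<le> card ({j. (i0,j)\<in>P} - {j0})"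
        using fin by (intro card_mono) auto
      also have "\<dots> = N i0 - 1" using fin jin cr by simp
      finally have "card {j. (i0,j)\<in>P \<and> j \<le> t} \<le> N i0 - 1" .
      moreover have "0 < card {j. (i0,j)\<in>P}" by (rule card_gt_0_iff[THEN iffD2]) (use fin jin in blast)
      then have "N i0 > 0" using cr by simp
      ultimately show ?thesis using t_def by simp
    qed
    have "(\<Sum>i\<in>{1..m}. card {j. (i,j)\<in>P \<and> j \<le> t}) < (\<Sum>i\<in>{1..m}. min (N i) t)"
      by (rule sum_strict_mono_ex1) (use le lt b in auto)
    then show False using eq by simp
  qed
qed

context
  fixes F assumes sh: "has_shape m n F" and ty: "has_type F (star m n \<nu>)"
begin

lemma finF: "finite F" and cardF: "card F = n" and setsF: "\<And>S. S \<in> F \<Longrightarrow> finite S \<and> card S = m \<and> S \<subseteq> {1..}"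
  using sh by (auto simp: has_shape_def)

lemma lo: "x \<in> {1..m} \<Longrightarrow> cnt F x = n - N(m+1-x)" and hi: "j \<in> {1..N 1} \<Longrightarrow> cnt F (m+j) = card {i. (i,j)\<in>Y}"
  using type_D[OF ty] by auto

lemma miss: "x \<in> {1..m} \<Longrightarrow> card {S\<in>F. x \<notin> S} = N(m+1-x)"
proof -
  assume x: "x \<in> {1..m}"
  have "card {S\<in>F. x \<notin> S} \<le> n" using card_mono[OF finF, of "{S\<in>F. x \<notin> S}"] cardF by auto
  moreover have "cnt F x = n - card {S\<in>F. x \<notin> S}" using card_split[OF finF] cardF by (simp add: cnt_def)
  moreover have "N(m+1-x) \<le> n" using N_le_n[of "m+1-x"] by simp
  ultimately show ?thesis using lo[OF x] by simp
qed

definition d where "d S = card ({1..m} - S)"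

lemma sumd: "(\<Sum>S\<in>F. d S) = n - 1"
proof -
  have "(\<Sum>S\<in>F. d S) = (\<Sum>S\<in>F. \<Sum>x\<in>{1..m}. if x \<notin> S then 1 else 0)"
  proof (intro sum.cong refl)
    fix S
    have "{1..m} - S = {x\<in>{1..m}. x \<notin> S}" by auto
    then show "d S = (\<Sum>x\<in>{1..m}. if x \<notin> S then 1 else 0)" by (simp add: d_def ind_sum)
  qed
  also have "\<dots> = (\<Sum>x\<in>{1..m}. \<Sum>S\<in>F. if x \<notin> S then 1 else 0)" by (rule sum.swap)
  also have "\<dots> = (\<Sum>x\<in>{1..m}. N(m+1-x))"
    by (intro sum.cong refl) (simp add: ind_sum[OF finF] miss)
  also have "\<dots> = (\<Sum>k\<in>{1..m}. N k)"
    by (rule sum.reindex_bij_witness[of _ "\<lambda>k. m+1-k" "\<lambda>k. m+1-k"]) auto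
  finally show ?thesis using sum_N by simp
qed

lemma dcomp: "S \<in> F \<Longrightarrow> card (S - {1..m}) = d S"
proof -
  assume S: "S \<in> F"
  have "card S = card (S \<inter> {1..m}) + card (S - {1..m})" using setsF[OF S] card_split_Diff by blast
  moreover have "card {1..m} = card ({1..m} \<inter> S) + card ({1..m} - S)" using card_split_Diff by blast
  moreover have "{1..m} \<inter> S = S \<inter> {1..m}" by blast
  ultimately show ?thesis using setsF[OF S] by (simp add: d_def)
qed

lemma d0: "S \<in> F \<Longrightarrow> d S = 0 \<Longrightarrow> S = {1..m}"
proof -
  assume S: "S \<in> F" "d S = 0"
  then have "{1..m} - S = {}" by (simp add: d_def)
  then have "{1..m} \<subseteq> S" by blast
  moreover have "card {1..m} = card S" using setsF[OF S(1)] by simp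
  ultimately show ?thesis using setsF[OF S(1)] card_subset_eq by metis
qed

lemma dle1: "S \<in> F \<Longrightarrow> d S \<le> 1"
proof (rule ccontr)
  assume S1: "S \<in> F" "\<not> d S \<le> 1"
  let ?A = "{1..m::nat}"
  have "(\<Sum>T\<in>F. if T \<noteq> ?A then 1 else 0) < (\<Sum>T\<in>F. d T)"
  proof (rule sum_strict_mono_ex1[OF finF])
    show "\<forall>T\<in>F. (if T \<noteq> ?A then 1 else 0) \<le> d T"
    proof
      fix T assume T: "T \<in> F"
      show "(if T \<noteq> ?A then 1 else 0) \<le> d T"
      proof (cases "T = ?A")
        case False
        then have "d T \<noteq> 0" using d0[OF T] by blast
        then show ?thesis using False by simp
      qed simp
    qed
    have "S \<noteq> ?A" using S1 by (auto simp: d_def)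
    then show "\<exists>T\<in>F. (if T \<noteq> ?A then 1 else 0) < d T" using S1 by (intro bexI[of _ S]) auto
  qed
  moreover have "(\<Sum>T\<in>F. if T \<noteq> ?A then 1 else 0) = card (F - {?A})"
  proof -
    have "F - {?A} = {T\<in>F. T \<noteq> ?A}" by blast
    then show ?thesis using ind_sum[OF finF, of "\<lambda>T. T \<noteq> ?A"] by simp
  qed
  moreover have "card F - 1 \<le> card (F - {?A})" using diff_card_le_card_Diff[of "{?A}" F] by simp
  ultimately show False using sumd cardF by simp
qed

lemma decomp: "S \<in> F \<Longrightarrow> S \<noteq> {1..m} \<Longrightarrow> \<exists>i j. 1 \<le> i \<and> i \<le> m \<and> 1 \<le> j \<and> S = gs m i j"
proof -
  assume S: "S \<in> F" "S \<noteq> {1..m}"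
  have "d S = 1" using d0[OF S(1)] dle1[OF S(1)] S(2) by fastforce
  then have "card ({1..m} - S) = 1" "card (S - {1..m}) = 1" using dcomp[OF S(1)] by (auto simp: d_def)
  then obtain a b where a: "{1..m} - S = {a}" and b: "S - {1..m} = {b}" by (meson card_1_singletonE)
  have ha: "a \<in> {1..m}" "a \<notin> S" using a by auto
  have hb: "b \<in> S" "b \<notin> {1..m}" using b by auto
  have "1 \<le> b" using setsF[OF S(1)] hb by auto
  then have bm: "m < b" using hb by auto
  have Seq: "S = insert b ({1..m} - {a})"
  proof (rule set_eqI)
    fix x show "x \<in> S \<longleftrightarrow> x \<in> insert b ({1..m} - {a})"
    proof (cases "x \<in> {1..m}")
      case True
      have e: "x \<in> {1..m} - S \<longleftrightarrow> x \<in> {a}" using a by simp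
      have "x \<noteq> b" using True hb by blast
      then show ?thesis using e True by blast
    next
      case False
      have e: "x \<in> S - {1..m} \<longleftrightarrow> x \<in> {b}" using b by simp
      then show ?thesis using False by blast
    qed
  qed
  have e1: "m + (b - m) = b" using bm by simp
  have e2: "m + 1 - (m + 1 - a) = a" using ha by simp
  have gseq: "gs m (m+1-a) (b-m) = insert b ({1..m} - {a})"
    unfolding gs_def e1 e2 ..
  have eqS: "S = gs m (m+1-a) (b-m)" using Seq gseq by simp
  have "1 \<le> m+1-a" "m+1-a \<le> m" "1 \<le> b - m" using ha bm by auto
  then show ?thesis using eqS by blast
qed

definition P where "P = {(i,j). 1 \<le> i \<and> i \<le> m \<and> 1 \<le> j \<and> gs m i j \<in> F}"

lemma P_sub_Y: "P \<subseteq> Y"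
proof (rule ferrers)
  show "\<forall>p\<in>P. 1 \<le> fst p \<and> fst p \<le> m \<and> 1 \<le> snd p" by (auto simp: P_def)
  show "\<forall>i\<in>{1..m}. finite {j. (i,j)\<in>P} \<and> card {j. (i,j)\<in>P} = N i"
  proof
    fix i assume i: "i \<in> {1..m}"
    let ?x = "m+1-i"
    have x: "?x \<in> {1..m}" using i by auto
    have inj: "inj_on (\<lambda>j. gs m i j) {j. (i,j)\<in>P}"
    proof (rule inj_onI)
      fix j j' assume a: "j \<in> {j. (i,j)\<in>P}" "j' \<in> {j. (i,j)\<in>P}" "gs m i j = gs m i j'"
      have "1 \<le> j" "1 \<le> j'" using a(1,2) by (auto simp: P_def)
      moreover have "1 \<le> i" "i \<le> m" using i by auto
      ultimately show "j = j'" using gs_inj[of i m i j j'] a(3) by blast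
    qed
    have eq: "(\<lambda>j. gs m i j) ` {j. (i,j)\<in>P} = {S\<in>F. ?x \<notin> S}"
    proof (intro set_eqI iffI)
      fix S assume "S \<in> (\<lambda>j. gs m i j) ` {j. (i,j)\<in>P}"
      then obtain j where j: "S = gs m i j" "1 \<le> j" "gs m i j \<in> F" by (auto simp: P_def)
      have ii: "1 \<le> i" "i \<le> m" using i by auto
      have "?x \<notin> gs m i j" using gs_low[OF ii j(2) x] by simp
      then show "S \<in> {S\<in>F. ?x \<notin> S}" using j by simp
    next
      fix S assume S: "S \<in> {S\<in>F. ?x \<notin> S}"
      then have "S \<noteq> {1..m}" using x by auto
      then obtain i' j' where ij: "1 \<le> i'" "i' \<le> m" "1 \<le> j'" "S = gs m i' j'" using decomp S by blast
      have "?x = m+1-i'" using gs_low[OF ij(1-3) x] S ij(4) by simp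
      then have "i' = i" using i ij by simp
      then show "S \<in> (\<lambda>j. gs m i j) ` {j. (i,j)\<in>P}" using ij S i by (auto simp: P_def)
    qed
    have fin: "finite {j. (i,j)\<in>P}"
      by (rule finite_imageD[OF _ inj]) (use eq finF in simp)
    have "card {j. (i,j)\<in>P} = card {S\<in>F. ?x \<notin> S}" using card_image[OF inj] eq by simp
    also have "\<dots> = N i" using miss[OF x] i by simp
    finally show "finite {j. (i,j)\<in>P} \<and> card {j. (i,j)\<in>P} = N i" using fin by simp
  qed
  show "\<forall>j\<in>{1..N 1}. card {i. (i,j)\<in>P} = card {i. (i,j)\<in>Y}"
  proof
    fix j assume j: "j \<in> {1..N 1}"
    have inj: "inj_on (\<lambda>i. gs m i j) {i. (i,j)\<in>P}"
    proof (rule inj_onI)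
      fix i i' assume a: "i \<in> {i. (i,j)\<in>P}" "i' \<in> {i. (i,j)\<in>P}" "gs m i j = gs m i' j"
      have "1 \<le> i" "i \<le> m" "1 \<le> i'" "i' \<le> m" using a(1,2) by (auto simp: P_def)
      moreover have "1 \<le> j" using j by auto
      ultimately show "i = i'" using gs_inj[of i m i' j j] a(3) by blast
    qed
    have eq: "(\<lambda>i. gs m i j) ` {i. (i,j)\<in>P} = {S\<in>F. m+j \<in> S}"
    proof (intro set_eqI iffI)
      fix S assume "S \<in> (\<lambda>i. gs m i j) ` {i. (i,j)\<in>P}"
      then obtain i where "S = gs m i j" "gs m i j \<in> F" by (auto simp: P_def)
      then show "S \<in> {S\<in>F. m+j \<in> S}" by (simp add: gs_def)
    next
      fix S assume S: "S \<in> {S\<in>F. m+j \<in> S}"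
      then have "S \<noteq> {1..m}" using j by auto
      then obtain i' j' where ij: "1 \<le> i'" "i' \<le> m" "1 \<le> j'" "S = gs m i' j'" using decomp S by blast
      have "m < m+j" using j by simp
      then have "m+j = m+j'" using gs_high[of m "m+j" j' i'] ij S by simp
      then have "j' = j" by simp
      then show "S \<in> (\<lambda>i. gs m i j) ` {i. (i,j)\<in>P}" using ij S by (auto simp: P_def)
    qed
    have "card {i. (i,j)\<in>P} = card {S\<in>F. m+j \<in> S}" using card_image[OF inj] eq by simp
    also have "\<dots> = card {i. (i,j)\<in>Y}" using hi[OF j] by (simp add: cnt_def)
    finally show "card {i. (i,j)\<in>P} = card {i. (i,j)\<in>Y}" .
  qed
qed

lemma F_eq: "F = F0"
proof -
  have "F \<subseteq> F0"
  proof
    fix S assume S: "S \<in> F"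
    show "S \<in> F0"
    proof (cases "S = {1..m}")
      case True then show ?thesis by (simp add: F0_def)
    next
      case False
      then obtain i j where ij: "1 \<le> i" "i \<le> m" "1 \<le> j" "S = gs m i j" using decomp S by blast
      then have "(i,j) \<in> P" using S by (simp add: P_def)
      then have "(i,j) \<in> Y" using P_sub_Y by blast
      then show ?thesis using ij by (force simp: F0_def)
    qed
  qed
  then show ?thesis using card_subset_eq[OF fin_F0] cardF card_F0 by simp
qed

end

end

theorem proposition5p2:
  fixes m n :: nat and \<nu> :: "nat list"
  assumes "1 \<le> n"
    and "is_partition_of (n - 1) \<nu>"
    and "length \<nu> \<le> m"
  shows "\<exists>!F :: nat set set. has_shape m n F \<and> has_type F (star m n \<nu>)"
proof -
  interpret stp m n \<nu> using assms by unfold_locales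
  show ?thesis
  proof (rule ex1I[of _ F0])
    show "has_shape m n F0 \<and> has_type F0 (star m n \<nu>)" using shape_F0 type_F0 by simp
    fix F assume "has_shape m n F \<and> has_type F (star m n \<nu>)"
    then show "F = F0" using F_eq by blast
  qed
qed

end
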